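(* Let $K_1\subset\mathbb C$ and $K_2\subset\mathbb C^m$ be compact sets. Under the identification $F\mapsto(x\mapsto F(x,\cdot))$ of $C(K_1\times K_2)$ with $C(K_1,C(K_2))$, we have \[ A_D(K_1\times K_2)\subset A\big(K_1,A_D(K_2)\big); \] that is, for every $F\in A_D(K_1\times K_2)$ and every $x\in K_1$ the function $F(x,\cdot)$ belongs to $A_D(K_2)$, and the map $x\mapsto F(x,\cdot)$ from $K_1$ to the Banach space $A_D(K_2)$ is continuous on $K_1$ and holomorphic on $K_1^\circ$.
   Context: For a compact $K\subset\mathbb C^n$, $A_D(K)$ is the set of continuous functions $f:K\to\mathbb C$ such that for every open disc $D\subset\mathbb C$ and every injective holomorphic mapping $\phi:D\to\mathbb C^n$ with $\phi(D)\subset K$, $f\circ\phi$ is holomorphic on $D$; it is a Banach space under the supremum norm. For a planar compact $K_1$ and a Banach space $W$, $A(K_1,W)$ is the space of continuous maps $K_1\to W$ that are holomorphic (as $W$-valued functions) on the interior $K_1^\circ$. *)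

theory Defs
  imports "HOL-Complex_Analysis.Complex_Analysis"
begin

text \<open>Points of C^n are vectors complex^'n (index type 'n finite, n = CARD('n)).
A map phi from an open disc to C^n is holomorphic iff each coordinate is.\<close>

definition holo_map_on :: "(complex \<Rightarrow> complex^'n) \<Rightarrow> complex set \<Rightarrow> bool" where
  "holo_map_on phi D \<longleftrightarrow> (\<forall>i. (\<lambda>z. phi z $ i) holomorphic_on D)"

definition AD :: "(complex^'n) set \<Rightarrow> (complex^'n \<Rightarrow> complex) set" where
  "AD K = {f. continuous_on K f \<and>
     (\<forall>c r phi. r > 0 \<longrightarrow> holo_map_on phi (ball c r) \<longrightarrow> inj_on phi (ball c r)
        \<longrightarrow> phi ` ball c r \<subseteq> K \<longrightarrow> (f \<circ> phi) holomorphic_on ball c r)}"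

text \<open>C x C^m is identified with C^(1+m) via the index type 'm option:
coordinate None is the first (planar) coordinate.\<close>

definition pt :: "complex \<Rightarrow> complex^'m \<Rightarrow> complex^('m option)" where
  "pt x w = (\<chi> i. case i of None \<Rightarrow> x | Some j \<Rightarrow> w $ j)"

definition prodset :: "complex set \<Rightarrow> (complex^'m) set \<Rightarrow> (complex^('m option)) set" where
  "prodset K1 K2 = {pt x w | x w. x \<in> K1 \<and> w \<in> K2}"

end

theory Submission
  imports Defs
begin

lemma pt_None[simp]: "pt x w $ None = x" and pt_Some[simp]: "pt x w $ Some j = w $ j"
  by (simp_all add: pt_def)

lemma norm_pt_diff: "norm (pt x w - pt y w) = norm (x - y)"
proof -
  have "(\<Sum>i\<in>UNIV. (norm ((pt x w - pt y w) $ i))^2) = (norm (x - y))^2"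
  proof -
    have "(\<Sum>i\<in>UNIV. (norm ((pt x w - pt y w) $ i))^2) = (\<Sum>i\<in>{None}. (norm ((pt x w - pt y w) $ i))^2)"
      by (rule sum.mono_neutral_right) (auto, metis option.exhaust pt_Some)
    then show ?thesis by simp
  qed
  then show ?thesis unfolding norm_vec_def L2_set_def by simp
qed

lemma dist_pt: "dist (pt x w) (pt y w) = dist x y"
  by (simp add: dist_norm norm_pt_diff)

lemma continuous_pt: "continuous_on UNIV (\<lambda>p. pt (fst p) (snd p))"
  unfolding pt_def
proof (intro continuous_on_vec_lambda)
  fix i :: "'a option"
  show "continuous_on UNIV (\<lambda>x. case i of None \<Rightarrow> fst x | Some j \<Rightarrow> snd x $ j)"
    by (cases i) (auto intro!: continuous_intros)
qed

lemma compact_prodset: "compact K1 \<Longrightarrow> compact K2 \<Longrightarrow> compact (prodset K1 K2)"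
proof -
  assume "compact K1" "compact K2"
  have "prodset K1 K2 = (\<lambda>p. pt (fst p) (snd p)) ` (K1 \<times> K2)"
    unfolding prodset_def by force
  moreover have "compact ((\<lambda>p. pt (fst p) (snd p)) ` (K1 \<times> K2))"
    by (rule compact_continuous_image[OF continuous_on_subset[OF continuous_pt]])
       (auto intro: compact_Times \<open>compact K1\<close> \<open>compact K2\<close>)
  ultimately show ?thesis by simp
qed

lemma pt_in_prodset[intro]: "x \<in> K1 \<Longrightarrow> w \<in> K2 \<Longrightarrow> pt x w \<in> prodset K1 K2"
  unfolding prodset_def by blast

lemma uniform_limit_compose_right:
  assumes "uniform_limit K f g F" "phi ` A \<subseteq> K"
  shows "uniform_limit A (\<lambda>x z. f x (phi z)) (g \<circ> phi) F"
  unfolding uniform_limit_iff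
proof (intro allI impI)
  fix e :: real assume "e > 0"
  then have "\<forall>\<^sub>F n in F. \<forall>x\<in>K. dist (f n x) (g x) < e" using assms(1) unfolding uniform_limit_iff by blast
  then show "\<forall>\<^sub>F n in F. \<forall>x\<in>A. dist (f n (phi x)) ((g \<circ> phi) x) < e"
    by (rule eventually_mono) (use assms(2) in auto)
qed

lemma slice_AD:
  assumes F: "F \<in> AD (prodset K1 K2)" and x: "x \<in> K1"
  shows "(\<lambda>w. F (pt x w)) \<in> AD K2"
proof -
  have cF: "continuous_on (prodset K1 K2) F" using F by (simp add: AD_def)
  have sub: "pt x ` K2 \<subseteq> prodset K1 K2" using x by (auto simp: prodset_def)
  have cpt: "continuous_on K2 (pt x)"
    unfolding pt_def
  proof (intro continuous_on_vec_lambda)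
    fix i :: "'a option"
    show "continuous_on K2 (\<lambda>w. case i of None \<Rightarrow> x | Some j \<Rightarrow> w $ j)"
      by (cases i) (auto intro!: continuous_intros)
  qed
  have c: "continuous_on K2 (\<lambda>w. F (pt x w))"
    using continuous_on_compose[OF cpt continuous_on_subset[OF cF sub]] by (simp add: o_def)
  have "((\<lambda>w. F (pt x w)) \<circ> phi) holomorphic_on ball c r"
    if r: "r > 0" and hp: "holo_map_on phi (ball c r)" and ij: "inj_on phi (ball c r)"
      and im: "phi ` ball c r \<subseteq> K2" for c r phi
  proof -
    define psi where "psi z = pt x (phi z)" for z
    have "holo_map_on psi (ball c r)"
      unfolding holo_map_on_def
    proof
      fix i :: "'a option"
      show "(\<lambda>z. psi z $ i) holomorphic_on ball c r"
      proof (cases i)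
        case None then show ?thesis by (simp add: psi_def)
      next
        case (Some j) then show ?thesis using hp by (simp add: psi_def holo_map_on_def)
      qed
    qed
    moreover have "inj_on psi (ball c r)"
    proof (rule inj_onI)
      fix a b assume a: "a \<in> ball c r" and b: "b \<in> ball c r" and e: "psi a = psi b"
      have "phi a = phi b"
      proof (rule vec_eq_iff[THEN iffD2], rule allI)
        fix j
        have "psi a $ Some j = psi b $ Some j" using e by simp
        then show "phi a $ j = phi b $ j" by (simp add: psi_def)
      qed
      then show "a = b" using ij a b by (auto dest: inj_onD)
    qed
    moreover have "psi ` ball c r \<subseteq> prodset K1 K2"
      using im x by (auto simp: psi_def prodset_def)
    ultimately have "(F \<circ> psi) holomorphic_on ball c r"
      using F r by (simp add: AD_def)
    then show ?thesis by (simp add: psi_def o_def)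
  qed
  then show ?thesis using c by (simp add: AD_def)
qed

lemma fiber_holo:
  assumes F: "F \<in> AD (prodset K1 K2)" and B: "ball x0 R \<subseteq> K1" and w: "w \<in> K2" and R: "R > 0"
  shows "(\<lambda>x. F (pt x w)) holomorphic_on ball x0 R"
proof -
  define psi where "psi z = pt z w" for z
  have "holo_map_on psi (ball x0 R)"
    unfolding holo_map_on_def
  proof
    fix i :: "'a option"
    show "(\<lambda>z. psi z $ i) holomorphic_on ball x0 R"
      by (cases i) (simp_all add: psi_def)
  qed
  moreover have "inj_on psi (ball x0 R)"
    by (rule inj_onI) (metis pt_None psi_def)
  moreover have "psi ` ball x0 R \<subseteq> prodset K1 K2"
    using B w by (auto simp: psi_def prodset_def)
  ultimately have "(F \<circ> psi) holomorphic_on ball x0 R"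
    using F R by (simp add: AD_def)
  then show ?thesis by (simp add: psi_def o_def)
qed

lemma part2:
  assumes "compact K1" "compact K2" "F \<in> AD (prodset K1 K2)" "x0 \<in> K1"
  shows "uniform_limit K2 (\<lambda>x w. F (pt x w)) (\<lambda>w. F (pt x0 w)) (at x0 within K1)"
proof -
  have "uniformly_continuous_on (prodset K1 K2) F"
    using assms by (intro compact_uniformly_continuous compact_prodset) (auto simp: AD_def)
  show ?thesis unfolding uniform_limit_iff
  proof (intro allI impI)
    fix e :: real assume e: "e > 0"
    obtain d where d: "d > 0" and hd: "\<And>p q. p \<in> prodset K1 K2 \<Longrightarrow> q \<in> prodset K1 K2 \<Longrightarrow> dist q p < d \<Longrightarrow> dist (F q) (F p) < e"
      using \<open>uniformly_continuous_on (prodset K1 K2) F\<close> e unfolding uniformly_continuous_on_def by metis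
    show "\<forall>\<^sub>F x in at x0 within K1. \<forall>w\<in>K2. dist (F (pt x w)) (F (pt x0 w)) < e"
      unfolding eventually_at
    proof (intro exI conjI)
      show "d > 0" by (rule d)
      show "\<forall>x\<in>K1. x \<noteq> x0 \<and> dist x x0 < d \<longrightarrow> (\<forall>w\<in>K2. dist (F (pt x w)) (F (pt x0 w)) < e)"
        using assms(4) by (auto intro!: hd pt_in_prodset simp: dist_pt)
    qed
  qed
qed

lemma part3:
  assumes cK1: "compact K1" and cK2: "compact K2" and F: "F \<in> AD (prodset K1 K2)"
    and x0: "x0 \<in> interior K1"
  shows "\<exists>g\<in>AD K2. uniform_limit K2 (\<lambda>x w. (F (pt x w) - F (pt x0 w)) / (x - x0)) g (at x0)"
proof -
  obtain R where R: "R > 0" and BR: "ball x0 R \<subseteq> K1"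
    using x0 by (meson mem_interior)
  have x0K: "x0 \<in> K1" using x0 interior_subset by blast
  have cF: "continuous_on (prodset K1 K2) F" using F by (simp add: AD_def)
  have "compact (F ` prodset K1 K2)"
    by (intro compact_continuous_image cF compact_prodset cK1 cK2)
  then obtain M where M: "\<And>p. p \<in> prodset K1 K2 \<Longrightarrow> norm (F p) \<le> M"
    using compact_imp_bounded bounded_iff by (metis imageI)
  define s where "s = R / 3"
  have s: "s > 0" using R by (simp add: s_def)
  define B where "B = 2 * (max M 0 + 1) / s^2"
  define h where "h w = (\<lambda>x. F (pt x w))" for w
  define g where "g w = deriv (h w) x0" for w
  have hol: "h w holomorphic_on ball x0 R" if "w \<in> K2" for w
    unfolding h_def using fiber_holo[OF F BR that R] .
  have d2: "norm (deriv (deriv (h w)) y) \<le> B" if w: "w \<in> K2" and y: "y \<in> ball x0 s" for w y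
  proof -
    have sub: "cball y s \<subseteq> ball x0 R"
    proof
      fix z assume "z \<in> cball y s"
      then show "z \<in> ball x0 R" using y R dist_triangle[of x0 z y] by (auto simp: s_def dist_commute)
    qed
    have "norm ((deriv ^^ 2) (h w) y) \<le> fact 2 * (max M 0 + 1) / s ^ 2"
    proof (rule Cauchy_higher_deriv_bound)
      show "h w holomorphic_on ball y s"
        using hol[OF w] sub ball_subset_cball by (meson holomorphic_on_subset order_trans)
      show "continuous_on (cball y s) (h w)"
        using holomorphic_on_imp_continuous_on[OF hol[OF w]] sub continuous_on_subset by blast
      show "h w z \<in> ball 0 (max M 0 + 1)" if "z \<in> ball y s" for z
      proof -
        have "z \<in> K1" using that sub BR ball_subset_cball by blast
        then have "norm (h w z) \<le> M" using M w by (auto simp: h_def)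
        then show ?thesis by simp
      qed
    qed (use s in auto)
    then show ?thesis by (simp add: B_def numeral_2_eq_2)
  qed
  have Bnn: "B \<ge> 0"
    using s by (simp add: B_def)
  have tay: "norm (h w x - (h w x0 + g w * (x - x0))) \<le> B * norm (x - x0)^2"
    if w: "w \<in> K2" and x: "x \<in> ball x0 s" for w x
  proof -
    have sub: "ball x0 s \<subseteq> ball x0 R" using R by (auto simp: s_def)
    have dh: "(h w has_field_derivative deriv (h w) y) (at y)" if "y \<in> ball x0 R" for y
      using holomorphic_derivI[OF hol[OF w] open_ball that] .
    have dh2: "(deriv (h w) has_field_derivative deriv (deriv (h w)) y) (at y)" if "y \<in> ball x0 R" for y
      using holomorphic_derivI[OF holomorphic_deriv[OF hol[OF w] open_ball] open_ball that] .
    have "norm ((\<lambda>i. (deriv ^^ i) (h w)) 0 x - (\<Sum>i\<le>1. (\<lambda>i. (deriv ^^ i) (h w)) i x0 * (x - x0) ^ i / fact i))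
          \<le> B * norm (x - x0) ^ Suc 1 / fact 1"
    proof (rule complex_Taylor[where S="ball x0 s"])
      fix i :: nat and y assume y: "y \<in> ball x0 s" and i: "i \<le> 1"
      then have yR: "y \<in> ball x0 R" using sub by blast
      show "((deriv ^^ i) (h w) has_field_derivative (deriv ^^ Suc i) (h w) y) (at y within ball x0 s)"
      proof (cases i)
        case 0 then show ?thesis using dh[OF yR] by (simp add: has_field_derivative_at_within)
      next
        case (Suc j) then have "i = 1" using i by simp
        then show ?thesis using dh2[OF yR] by (simp add: has_field_derivative_at_within)
      qed
    next
      fix y assume "y \<in> ball x0 s"
      then show "norm ((deriv ^^ Suc 1) (h w) y) \<le> B" using d2[OF w] by simp
    qed (use x s in auto)
    then show ?thesis by (simp add: g_def algebra_simps power2_eq_square)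
  qed
  have ulim: "uniform_limit K2 (\<lambda>x w. (F (pt x w) - F (pt x0 w)) / (x - x0)) g (at x0)"
    unfolding uniform_limit_iff
  proof (intro allI impI)
    fix e :: real assume e: "e > 0"
    define d where "d = min s (e / (B + 1))"
    have d: "d > 0" using s e Bnn by (simp add: d_def)
    show "\<forall>\<^sub>F x in at x0. \<forall>w\<in>K2. dist ((F (pt x w) - F (pt x0 w)) / (x - x0)) (g w) < e"
      unfolding eventually_at
    proof (intro exI conjI)
      show "d > 0" by (rule d)
      show "\<forall>x\<in>UNIV. x \<noteq> x0 \<and> dist x x0 < d \<longrightarrow> (\<forall>w\<in>K2. dist ((F (pt x w) - F (pt x0 w)) / (x - x0)) (g w) < e)"
      proof (intro ballI impI)
        fix x w assume x: "x \<noteq> x0 \<and> dist x x0 < d" and w: "w \<in> K2"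
        have xb: "x \<in> ball x0 s" using x by (auto simp: d_def dist_commute)
        have nz: "norm (x - x0) > 0" using x by simp
        have "dist ((F (pt x w) - F (pt x0 w)) / (x - x0)) (g w)
              = norm (h w x - (h w x0 + g w * (x - x0))) / norm (x - x0)"
        proof -
          have "(F (pt x w) - F (pt x0 w)) / (x - x0) - g w = (h w x - (h w x0 + g w * (x - x0))) / (x - x0)"
            using x by (simp add: h_def field_simps)
          then show ?thesis by (simp add: dist_norm norm_divide)
        qed
        also have "\<dots> \<le> B * norm (x - x0)^2 / norm (x - x0)"
          by (rule divide_right_mono[OF tay[OF w xb]]) simp
        also have "\<dots> = B * norm (x - x0)" using nz by (simp add: power2_eq_square)
        also have "\<dots> < e"
        proof -
          have "norm (x - x0) < e / (B + 1)" using x by (simp add: d_def dist_norm)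
          then have "B * norm (x - x0) \<le> B * (e / (B + 1))" using Bnn by (intro mult_left_mono) auto
          also have "\<dots> < e" using Bnn e by (simp add: field_simps)
          finally show ?thesis .
        qed
        finally show "dist ((F (pt x w) - F (pt x0 w)) / (x - x0)) (g w) < e" .
      qed
    qed
  qed
  have evK1: "\<forall>\<^sub>F x in at x0. x \<in> K1 \<and> x \<noteq> x0"
    unfolding eventually_at using R BR by (intro exI[of _ R]) (auto simp: dist_commute)
  have slx: "(\<lambda>w. (F (pt x w) - F (pt x0 w)) / (x - x0)) \<in> AD K2" if x: "x \<in> K1" and xne: "x \<noteq> x0" for x
  proof -
    have A: "(\<lambda>w. F (pt x w)) \<in> AD K2" and A0: "(\<lambda>w. F (pt x0 w)) \<in> AD K2"
      using slice_AD[OF F x] slice_AD[OF F x0K] by auto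
    have "continuous_on K2 (\<lambda>w. (F (pt x w) - F (pt x0 w)) / (x - x0))"
      using A A0 xne unfolding AD_def by (auto intro!: continuous_intros)
    moreover have "((\<lambda>w. (F (pt x w) - F (pt x0 w)) / (x - x0)) \<circ> phi) holomorphic_on ball c r"
      if "r > 0" "holo_map_on phi (ball c r)" "inj_on phi (ball c r)" "phi ` ball c r \<subseteq> K2" for c r phi
    proof -
      have "((\<lambda>w. F (pt x w)) \<circ> phi) holomorphic_on ball c r" "((\<lambda>w. F (pt x0 w)) \<circ> phi) holomorphic_on ball c r"
        using A A0 that unfolding AD_def by blast+
      then show ?thesis using xne unfolding o_def by (intro holomorphic_intros) auto
    qed
    ultimately show ?thesis unfolding AD_def by blast
  qed
  have gAD: "g \<in> AD K2"
    unfolding AD_def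
  proof (intro CollectI conjI allI impI)
    show "continuous_on K2 g"
    proof (rule uniform_limit_theorem[OF _ ulim])
      show "\<forall>\<^sub>F x in at x0. continuous_on K2 (\<lambda>w. (F (pt x w) - F (pt x0 w)) / (x - x0))"
        using evK1 by (rule eventually_mono) (use slx in \<open>auto simp: AD_def\<close>)
    qed simp
  next
    fix c r phi assume r: "(r::real) > 0" and hp: "holo_map_on phi (ball c r)" and ij: "inj_on phi (ball c r)"
      and im: "phi ` ball c r \<subseteq> K2"
    have hq: "((\<lambda>w. (F (pt x w) - F (pt x0 w)) / (x - x0)) \<circ> phi) holomorphic_on ball c r" if "x \<in> K1" "x \<noteq> x0" for x
      using slx[OF that] r hp ij im unfolding AD_def by blast
    show "(g \<circ> phi) holomorphic_on ball c r"
      unfolding holomorphic_on_open[OF open_ball]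
    proof
      fix z assume z: "z \<in> ball c r"
      obtain d where d: "d > 0" "cball z d \<subseteq> ball c r"
        using open_contains_cball z by (metis open_ball)
      have ul: "uniform_limit (cball z d) (\<lambda>x z. (F (pt x (phi z)) - F (pt x0 (phi z))) / (x - x0)) (g \<circ> phi) (at x0)"
        by (rule uniform_limit_compose_right[OF ulim]) (use d im in blast)
      have ev: "\<forall>\<^sub>F x in at x0. continuous_on (cball z d) (\<lambda>z. (F (pt x (phi z)) - F (pt x0 (phi z))) / (x - x0))
                 \<and> (\<lambda>z. (F (pt x (phi z)) - F (pt x0 (phi z))) / (x - x0)) holomorphic_on ball z d"
        using evK1
      proof (rule eventually_mono)
        fix x assume "x \<in> K1 \<and> x \<noteq> x0"
        then have H: "((\<lambda>w. (F (pt x w) - F (pt x0 w)) / (x - x0)) \<circ> phi) holomorphic_on ball c r" using hq by blast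
        have "ball z d \<subseteq> ball c r" using d ball_subset_cball by blast
        then show "continuous_on (cball z d) (\<lambda>z. (F (pt x (phi z)) - F (pt x0 (phi z))) / (x - x0))
                 \<and> (\<lambda>z. (F (pt x (phi z)) - F (pt x0 (phi z))) / (x - x0)) holomorphic_on ball z d"
          using holomorphic_on_subset[OF H] continuous_on_subset[OF holomorphic_on_imp_continuous_on[OF H] d(2)]
          by (simp add: o_def)
      qed
      obtain "(g \<circ> phi) holomorphic_on ball z d"
        using holomorphic_uniform_limit[OF ev ul] by auto
      then show "\<exists>f'. ((g \<circ> phi) has_field_derivative f') (at z)"
        using d(1) holomorphic_on_open[of "ball z d" "g \<circ> phi"] by auto
    qed
  qed
  show ?thesis using gAD ulim by blast
qed

theorem mainTheorem12:
  fixes K1 :: "complex set" and K2 :: "(complex^'m) set"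
    and F :: "complex^('m option) \<Rightarrow> complex"
  assumes "compact K1" and "compact K2"
    and "F \<in> AD (prodset K1 K2)"
  shows "(\<forall>x\<in>K1. (\<lambda>w. F (pt x w)) \<in> AD K2)
    \<and> (\<forall>x0\<in>K1. uniform_limit K2 (\<lambda>x w. F (pt x w)) (\<lambda>w. F (pt x0 w)) (at x0 within K1))
    \<and> (\<forall>x0\<in>interior K1. \<exists>g\<in>AD K2.
          uniform_limit K2 (\<lambda>x w. (F (pt x w) - F (pt x0 w)) / (x - x0)) g (at x0))"
  using slice_AD[OF assms(3)] part2[OF assms] part3[OF assms] by blast

end
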